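(* Let $\gamma\in(0,1)$, $\alpha>0$, $\mu=\frac{1-\gamma}{\gamma}\alpha$, $\sigma>0$, let $p_{\rm in}(r)=C e^{-r^2/(2\sigma^2)}$ be a Gaussian inlier ray density on $[0,\infty)$ with $\mu<p_{\rm in}(0)$, and let $\tau>0$ solve $p_{\rm in}(\tau)=\mu$. Let $r(x_i,\theta)\ge0$ be residuals of observations $x_i$, $i=1,\dots,n$, with respect to model $\theta$. For maximizing the marginal likelihood $\sum_i\log(\gamma p_{\rm in}(r(x_i,\theta))+(1-\gamma)\alpha)$ in $\theta$ with $\gamma,\alpha$ fixed, the EM iteration and the IRLS iteration (for $\rho(r)=\operatorname{smax}(\frac{\tau^2-r^2}{2\sigma^2},0)$, update $\theta^{t+1}=\arg\min_\theta\sum_i w_i^t r(x_i,\theta)^2$ with $w_i^t=-\rho'(r_i^t)/r_i^t$, $r_i^t=r(x_i,\theta^t)$) coincide, and the update is $$q_i^t=p(k_i{=}1\mid r(x_i,\theta^t)),\qquad \theta^{t+1}=\arg\min_\theta\sum_{i=1}^n q_i^t\, r(x_i,\theta)^2,$$ where $p(k{=}1\mid r)=\frac{\gamma p_{\rm in}(r)}{\gamma p_{\rm in}(r)+(1-\gamma)\alpha}=\operatorname{sigm}\big(\frac{\tau^2-r^2}{2\sigma^2}\big)$.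
   Context: EM iteration: E-step computes posterior inlier probabilities $q_i^t$ at $\theta^t$; M-step maximizes $\sum_i[q_i^t\log(\gamma p_{\rm in}(r(x_i,\theta)))+(1-q_i^t)\log((1-\gamma)\alpha)]$ over $\theta$. $\operatorname{sigm}(x)=1/(1+e^{-x})$, $\operatorname{smax}(x,y)=\log(e^x+e^y)$; $k_i$ is the inlier indicator. *)

theory Defs
  imports "HOL-Analysis.Analysis"
begin

definition sigm :: "real \<Rightarrow> real" where
  "sigm x = 1 / (1 + exp (- x))"

definition smax :: "real \<Rightarrow> real \<Rightarrow> real" where
  "smax x y = ln (exp x + exp y)"

definition gauss_pin :: "real \<Rightarrow> real \<Rightarrow> real \<Rightarrow> real" where
  "gauss_pin C \<sigma> r = C * exp (- (r\<^sup>2) / (2 * \<sigma>\<^sup>2))"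

definition posterior :: "real \<Rightarrow> real \<Rightarrow> (real \<Rightarrow> real) \<Rightarrow> real \<Rightarrow> real" where
  "posterior \<gamma> \<alpha> pin r = \<gamma> * pin r / (\<gamma> * pin r + (1 - \<gamma>) * \<alpha>)"

definition em_objective ::
  "real \<Rightarrow> real \<Rightarrow> (real \<Rightarrow> real) \<Rightarrow> ('x \<Rightarrow> 'm \<Rightarrow> real) \<Rightarrow> (nat \<Rightarrow> 'x) \<Rightarrow> nat \<Rightarrow> 'm \<Rightarrow> 'm \<Rightarrow> real" where
  "em_objective \<gamma> \<alpha> pin res xs n \<theta>t \<theta> =
     (\<Sum>i<n. posterior \<gamma> \<alpha> pin (res (xs i) \<theta>t) * ln (\<gamma> * pin (res (xs i) \<theta>))
           + (1 - posterior \<gamma> \<alpha> pin (res (xs i) \<theta>t)) * ln ((1 - \<gamma>) * \<alpha>))"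

definition argmax_set :: "('m \<Rightarrow> real) \<Rightarrow> 'm set" where
  "argmax_set f = {\<theta>. \<forall>\<theta>'. f \<theta>' \<le> f \<theta>}"

definition argmin_set :: "('m \<Rightarrow> real) \<Rightarrow> 'm set" where
  "argmin_set f = {\<theta>. \<forall>\<theta>'. f \<theta> \<le> f \<theta>'}"

definition irls_weight :: "(real \<Rightarrow> real) \<Rightarrow> real \<Rightarrow> real" where
  "irls_weight \<rho> r =
     (if r > 0 then - deriv \<rho> r / r
      else Lim (at_right 0) (\<lambda>s. - deriv \<rho> s / s))"

definition irls_objective ::
  "(real \<Rightarrow> real) \<Rightarrow> ('x \<Rightarrow> 'm \<Rightarrow> real) \<Rightarrow> (nat \<Rightarrow> 'x) \<Rightarrow> nat \<Rightarrow> 'm \<Rightarrow> 'm \<Rightarrow> real" where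
  "irls_objective \<rho> res xs n \<theta>t \<theta> =
     (\<Sum>i<n. irls_weight \<rho> (res (xs i) \<theta>t) * (res (xs i) \<theta>)\<^sup>2)"

definition rho_tau :: "real \<Rightarrow> real \<Rightarrow> real \<Rightarrow> real" where
  "rho_tau \<tau> \<sigma> r = smax ((\<tau>\<^sup>2 - r\<^sup>2) / (2 * \<sigma>\<^sup>2)) 0"

end

theory Submission
  imports Defs
begin

lemma post_sigm:
  fixes \<gamma> \<alpha> \<sigma> C \<tau> r :: real
  assumes "0 < \<gamma>" "\<gamma> < 1" "0 < \<alpha>" "0 < \<sigma>" "0 < C"
    and "gauss_pin C \<sigma> \<tau> = (1 - \<gamma>) / \<gamma> * \<alpha>"
  shows "posterior \<gamma> \<alpha> (gauss_pin C \<sigma>) r = sigm ((\<tau>\<^sup>2 - r\<^sup>2) / (2 * \<sigma>\<^sup>2))"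
proof -
  define A where "A = - (r\<^sup>2) / (2 * \<sigma>\<^sup>2)"
  define B where "B = - (\<tau>\<^sup>2) / (2 * \<sigma>\<^sup>2)"
  have e: "(\<tau>\<^sup>2 - r\<^sup>2) / (2 * \<sigma>\<^sup>2) = A - B" unfolding A_def B_def using assms(4) by (simp add: field_simps)
  have h: "(1 - \<gamma>) * \<alpha> = \<gamma> * C * exp B"
    using assms(1,6) unfolding gauss_pin_def B_def by (simp add: field_simps)
  have "posterior \<gamma> \<alpha> (gauss_pin C \<sigma>) r = \<gamma> * C * exp A / (\<gamma> * C * exp A + \<gamma> * C * exp B)"
    unfolding posterior_def h by (simp add: gauss_pin_def A_def mult.assoc)
  also have "\<dots> = (\<gamma> * C) * exp A / ((\<gamma> * C) * (exp A + exp B))"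
    by (simp add: algebra_simps)
  also have "\<dots> = exp A / (exp A + exp B)"
    using assms(1,5) by simp
  also have "\<dots> = sigm (A - B)"
    unfolding sigm_def by (simp add: exp_diff field_simps add_pos_pos)
  finally show ?thesis using e by simp
qed

lemma argmin_scale:
  fixes f :: "'m \<Rightarrow> real" assumes "0 < c"
  shows "argmin_set (\<lambda>\<theta>. c * f \<theta>) = argmin_set f"
  unfolding argmin_set_def using assms by auto

lemma argmax_neg:
  fixes f :: "'m \<Rightarrow> real" assumes "0 < c"
  shows "argmax_set (\<lambda>\<theta>. K - c * f \<theta>) = argmin_set f"
  unfolding argmin_set_def argmax_set_def using assms by auto

lemma rho_deriv:
  fixes \<tau> \<sigma> s :: real assumes "0 < \<sigma>"
  shows "deriv (rho_tau \<tau> \<sigma>) s = sigm ((\<tau>\<^sup>2 - s\<^sup>2) / (2 * \<sigma>\<^sup>2)) * (- s / \<sigma>\<^sup>2)"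
proof -
  define a where "a = (\<lambda>s::real. (\<tau>\<^sup>2 - s\<^sup>2) / (2 * \<sigma>\<^sup>2))"
  have da: "(a has_real_derivative (- s / \<sigma>\<^sup>2)) (at s)"
    unfolding a_def using assms
    by (auto intro!: derivative_eq_intros simp: field_simps power2_eq_square)
  have "(rho_tau \<tau> \<sigma> has_real_derivative (exp (a s) * (- s / \<sigma>\<^sup>2) / (exp (a s) + 1))) (at s)"
  proof -
    have eq: "rho_tau \<tau> \<sigma> = (\<lambda>s. ln (exp (a s) + 1))"
      unfolding rho_tau_def smax_def a_def by auto
    show ?thesis unfolding eq
      by (rule derivative_eq_intros da refl | simp add: add_pos_pos)+
  qed
  moreover have "exp (a s) * (- s / \<sigma>\<^sup>2) / (exp (a s) + 1) = sigm (a s) * (- s / \<sigma>\<^sup>2)"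
    unfolding sigm_def by (simp add: exp_minus field_simps add_pos_pos)
  ultimately show ?thesis using DERIV_imp_deriv a_def by metis
qed

lemma weight:
  fixes \<tau> \<sigma> r :: real assumes "0 < \<sigma>" "0 \<le> r"
  shows "irls_weight (rho_tau \<tau> \<sigma>) r = sigm ((\<tau>\<^sup>2 - r\<^sup>2) / (2 * \<sigma>\<^sup>2)) / \<sigma>\<^sup>2"
proof -
  have w: "- deriv (rho_tau \<tau> \<sigma>) s / s = sigm ((\<tau>\<^sup>2 - s\<^sup>2) / (2 * \<sigma>\<^sup>2)) / \<sigma>\<^sup>2" if "s > 0" for s
    using rho_deriv[OF assms(1), of \<tau> s] that by (simp add: field_simps)
  show ?thesis
  proof (cases "r > 0")
    case True thus ?thesis using w by (simp add: irls_weight_def)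
  next
    case False
    hence r0: "r = 0" using assms by simp
    have c: "continuous_on UNIV (\<lambda>s::real. sigm ((\<tau>\<^sup>2 - s\<^sup>2) / (2 * \<sigma>\<^sup>2)) / \<sigma>\<^sup>2)"
      unfolding sigm_def using assms(1) by (intro continuous_intros) (auto, smt (verit) exp_gt_zero)
    have t: "((\<lambda>s. - deriv (rho_tau \<tau> \<sigma>) s / s) \<longlongrightarrow> sigm ((\<tau>\<^sup>2 - 0\<^sup>2) / (2 * \<sigma>\<^sup>2)) / \<sigma>\<^sup>2) (at_right 0)"
    proof (rule Lim_transform_eventually)
      show "((\<lambda>s::real. sigm ((\<tau>\<^sup>2 - s\<^sup>2) / (2 * \<sigma>\<^sup>2)) / \<sigma>\<^sup>2) \<longlongrightarrow> sigm ((\<tau>\<^sup>2 - 0\<^sup>2) / (2 * \<sigma>\<^sup>2)) / \<sigma>\<^sup>2) (at_right 0)"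
        using c by (metis UNIV_I continuous_on_def tendsto_within_subset subset_UNIV)
      show "\<forall>\<^sub>F s in at_right 0. sigm ((\<tau>\<^sup>2 - s\<^sup>2) / (2 * \<sigma>\<^sup>2)) / \<sigma>\<^sup>2 = - deriv (rho_tau \<tau> \<sigma>) s / s"
        using w by (intro eventually_mono[OF eventually_at_right_less]) simp
    qed
    show ?thesis using r0 tendsto_Lim[OF trivial_limit_at_right_real t] by (simp add: irls_weight_def)
  qed
qed

theorem proposition6:
  fixes \<gamma> \<alpha> \<sigma> C \<tau> :: real
    and res :: "'x \<Rightarrow> 'm \<Rightarrow> real" and xs :: "nat \<Rightarrow> 'x" and n :: nat and \<theta>t :: 'm
  assumes "0 < \<gamma>" and "\<gamma> < 1" and "0 < \<alpha>" and "0 < \<sigma>" and "0 < C"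
    and "(1 - \<gamma>) / \<gamma> * \<alpha> < gauss_pin C \<sigma> 0"
    and "0 < \<tau>" and "gauss_pin C \<sigma> \<tau> = (1 - \<gamma>) / \<gamma> * \<alpha>"
    and "\<forall>x \<theta>. 0 \<le> res x \<theta>"
  shows "(\<forall>r\<ge>0. posterior \<gamma> \<alpha> (gauss_pin C \<sigma>) r = sigm ((\<tau>\<^sup>2 - r\<^sup>2) / (2 * \<sigma>\<^sup>2)))
    \<and> argmax_set (em_objective \<gamma> \<alpha> (gauss_pin C \<sigma>) res xs n \<theta>t)
        = argmin_set (\<lambda>\<theta>. \<Sum>i<n. posterior \<gamma> \<alpha> (gauss_pin C \<sigma>) (res (xs i) \<theta>t) * (res (xs i) \<theta>)\<^sup>2)
    \<and> argmin_set (irls_objective (rho_tau \<tau> \<sigma>) res xs n \<theta>t)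
        = argmin_set (\<lambda>\<theta>. \<Sum>i<n. posterior \<gamma> \<alpha> (gauss_pin C \<sigma>) (res (xs i) \<theta>t) * (res (xs i) \<theta>)\<^sup>2)"
proof (intro conjI)
  have P: "\<And>r. posterior \<gamma> \<alpha> (gauss_pin C \<sigma>) r = sigm ((\<tau>\<^sup>2 - r\<^sup>2) / (2 * \<sigma>\<^sup>2))"
    using post_sigm assms by blast
  thus "\<forall>r\<ge>0. posterior \<gamma> \<alpha> (gauss_pin C \<sigma>) r = sigm ((\<tau>\<^sup>2 - r\<^sup>2) / (2 * \<sigma>\<^sup>2))" by simp
  define q where "q = (\<lambda>i. posterior \<gamma> \<alpha> (gauss_pin C \<sigma>) (res (xs i) \<theta>t))"
  define f where "f = (\<lambda>\<theta>. \<Sum>i<n. q i * (res (xs i) \<theta>)\<^sup>2)"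
  have lnp: "ln (\<gamma> * gauss_pin C \<sigma> x) = ln (\<gamma> * C) - x\<^sup>2 / (2 * \<sigma>\<^sup>2)" for x
    using assms unfolding gauss_pin_def by (simp add: ln_mult mult.assoc[symmetric])
  define K where "K = (\<Sum>i<n. q i * ln (\<gamma> * C) + (1 - q i) * ln ((1 - \<gamma>) * \<alpha>))"
  have "em_objective \<gamma> \<alpha> (gauss_pin C \<sigma>) res xs n \<theta>t = (\<lambda>\<theta>. K - (1 / (2 * \<sigma>\<^sup>2)) * f \<theta>)"
  proof (rule ext)
    fix \<theta>
    have "K - (1 / (2 * \<sigma>\<^sup>2)) * f \<theta> = (\<Sum>i<n. (q i * ln (\<gamma> * C) + (1 - q i) * ln ((1 - \<gamma>) * \<alpha>)) - (1 / (2 * \<sigma>\<^sup>2)) * (q i * (res (xs i) \<theta>)\<^sup>2))"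
      unfolding K_def f_def by (simp add: sum_subtractf sum_distrib_left)
    also have "\<dots> = em_objective \<gamma> \<alpha> (gauss_pin C \<sigma>) res xs n \<theta>t \<theta>"
      unfolding em_objective_def q_def lnp by (rule sum.cong) (auto simp: algebra_simps)
    finally show "em_objective \<gamma> \<alpha> (gauss_pin C \<sigma>) res xs n \<theta>t \<theta> = K - (1 / (2 * \<sigma>\<^sup>2)) * f \<theta>" by simp
  qed
  thus "argmax_set (em_objective \<gamma> \<alpha> (gauss_pin C \<sigma>) res xs n \<theta>t)
        = argmin_set (\<lambda>\<theta>. \<Sum>i<n. posterior \<gamma> \<alpha> (gauss_pin C \<sigma>) (res (xs i) \<theta>t) * (res (xs i) \<theta>)\<^sup>2)"
    using argmax_neg[of "1 / (2 * \<sigma>\<^sup>2)" K f] assms(4) unfolding f_def q_def by simp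
  have "irls_objective (rho_tau \<tau> \<sigma>) res xs n \<theta>t = (\<lambda>\<theta>. (1 / \<sigma>\<^sup>2) * f \<theta>)"
    unfolding irls_objective_def f_def q_def
    using weight[OF assms(4)] assms(9) P by (auto simp: sum_distrib_left)
  thus "argmin_set (irls_objective (rho_tau \<tau> \<sigma>) res xs n \<theta>t)
        = argmin_set (\<lambda>\<theta>. \<Sum>i<n. posterior \<gamma> \<alpha> (gauss_pin C \<sigma>) (res (xs i) \<theta>t) * (res (xs i) \<theta>)\<^sup>2)"
    using argmin_scale[of "1 / \<sigma>\<^sup>2" f] assms(4) unfolding f_def q_def by simp
qed

end
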